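(* Fix constants $0<C_1\le C_2$, an integer $K\ge1$, and constants $C,\delta>0$. Let $G=(V,E)$ be a proper graph on $n$ vertices and $N=(G,c)$ an electrical network with $C_1\le c_{ij}\le C_2$ for all $(i,j)\in E$. Let $\Gamma=\{x_1,\dots,x_K\}\subset V$ be distinct boundary vertices with boundary potentials $V_{x_k}=p_{x_k}$, $0\le p_{x_k}\le 1$, $k=1,\dots,K$. Then the potential distribution satisfies \[ V_i=\frac{\sum_{k=1}^K p_{x_k}c_{x_k}}{\sum_{k=1}^K c_{x_k}}+O\big((\ln n)^{-1}\big)\qquad\text{for each } i\in V\setminus\Gamma, \] where the implied constant depends only on $C_1,C_2,K,C,\delta$.
   Context: An electrical network $N=(G,c)$ on a simple graph $G=(V,E)$ assigns a conductance $c_{ij}=c_{ji}>0$ to each edge $(i,j)\in E$; write $c_i=\sum_{j:(i,j)\in E}c_{ij}$. Given a boundary set $\Gamma\subset V$ with prescribed values on $\Gamma$, the potential distribution is the function $V:V\to\mathbb{R}$ taking the prescribed values on $\Gamma$ and satisfying $\sum_{j:(i,j)\in E}c_{ij}(V_i-V_j)=0$ (i.e. $V_i=\sum_{j:(i,j)\in E}\frac{c_{ij}}{c_i}V_j$) for every $i\in V\setminus\Gamma$. Let $G=(V,E)$ be a simple graph on $n$ vertices and let $0<C_1\le C_2$, $K\ge 1$, $C>0$, $\delta>0$ be constants. $G$ is called proper if: (P1) $G$ is connected. (P2) Calling a cycle short if its length is at most $\frac{\ln n}{10\ln\ln n}$, any two distinct short cycles are at distance at least $\frac{\ln n}{\ln\ln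 n}$. (P3) $G$ contains at least one cycle of length 3, one of length 5, and one of length 7. (P4) For every conductance assignment $c$ on $E$ with $C_1\le c_{ij}\le C_2$ for all $(i,j)\in E$, every $L\subset V$ with $|L|\le K$, and every nonempty $S\subset V\setminus L$ with $|S|\le n/2$, writing $G'=G[V\setminus L]=(V',E')$, $\bar S=V\setminus(L\cup S)$, $E_{G'}(S,\bar S)$ for the set of edges of $G'$ with one end in $S$ and the other in $\bar S$, and $c'_i=\sum_{j:(i,j)\in E'}c_{ij}$, one has $\dfrac{\sum_{(i,j)\in E_{G'}(S,\bar S)}c_{ij}}{\sum_{i\in S}c'_i}\ge \dfrac{C_1}{6C_2}$. (P5) Every vertex $i\in V$ has degree $d(i)$ satisfying $\delta C\ln n< d(i)<4C\ln n$. Asymptotic notation refers to $n\to\infty$. *)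

theory Defs
  imports Complex_Main
begin

definition simple_graph :: "nat \<Rightarrow> (nat \<Rightarrow> nat \<Rightarrow> bool) \<Rightarrow> bool" where
  "simple_graph n E \<longleftrightarrow>
     (\<forall>i j. E i j \<longrightarrow> i < n \<and> j < n \<and> i \<noteq> j) \<and> (\<forall>i j. E i j \<longrightarrow> E j i)"

definition degree :: "(nat \<Rightarrow> nat \<Rightarrow> bool) \<Rightarrow> nat \<Rightarrow> nat" where
  "degree E i = card {j. E i j}"

definition conductance :: "(nat \<Rightarrow> nat \<Rightarrow> bool) \<Rightarrow> (nat \<Rightarrow> nat \<Rightarrow> real) \<Rightarrow> bool" where
  "conductance E c \<longleftrightarrow> (\<forall>i j. E i j \<longrightarrow> c i j = c j i \<and> c i j > 0)"

text \<open>c_i = sum of conductances of edges at i (vertex set {..<n}).\<close>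
definition total_cond :: "nat \<Rightarrow> (nat \<Rightarrow> nat \<Rightarrow> bool) \<Rightarrow> (nat \<Rightarrow> nat \<Rightarrow> real) \<Rightarrow> nat \<Rightarrow> real" where
  "total_cond n E c i = (\<Sum>j\<in>{j. j < n \<and> E i j}. c i j)"

definition connected_graph :: "nat \<Rightarrow> (nat \<Rightarrow> nat \<Rightarrow> bool) \<Rightarrow> bool" where
  "connected_graph n E \<longleftrightarrow> (\<forall>i<n. \<forall>j<n. E\<^sup>*\<^sup>* i j)"

definition is_cycle :: "nat \<Rightarrow> (nat \<Rightarrow> nat \<Rightarrow> bool) \<Rightarrow> nat list \<Rightarrow> bool" where
  "is_cycle n E vs \<longleftrightarrow> length vs \<ge> 3 \<and> distinct vs \<and> set vs \<subseteq> {..<n} \<and>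
     (\<forall>k<length vs. E (vs ! k) (vs ! ((k + 1) mod length vs)))"

text \<open>The (undirected) edge set of a cycle; two cycles are the same iff their edge sets agree.\<close>
definition cycle_edges :: "nat list \<Rightarrow> nat set set" where
  "cycle_edges vs = {{vs ! k, vs ! ((k + 1) mod length vs)} | k. k < length vs}"

definition dist_ge :: "(nat \<Rightarrow> nat \<Rightarrow> bool) \<Rightarrow> nat set \<Rightarrow> nat set \<Rightarrow> real \<Rightarrow> bool" where
  "dist_ge E A B L \<longleftrightarrow> (\<forall>u\<in>A. \<forall>v\<in>B. \<forall>k::nat. real k < L \<longrightarrow> \<not> (E ^^ k) u v)"

definition short_cycle :: "nat \<Rightarrow> nat list \<Rightarrow> bool" where
  "short_cycle n vs \<longleftrightarrow> real (length vs) \<le> ln (real n) / (10 * ln (ln (real n)))"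

definition proper :: "real \<Rightarrow> real \<Rightarrow> nat \<Rightarrow> real \<Rightarrow> real \<Rightarrow> nat \<Rightarrow> (nat \<Rightarrow> nat \<Rightarrow> bool) \<Rightarrow> bool" where
  "proper C1 C2 K C \<delta> n E \<longleftrightarrow>
     simple_graph n E \<and>
     \<comment> \<open>P1\<close>
     connected_graph n E \<and>
     \<comment> \<open>P2\<close>
     (\<forall>vs ws. is_cycle n E vs \<and> is_cycle n E ws \<and> short_cycle n vs \<and> short_cycle n ws \<and>
        cycle_edges vs \<noteq> cycle_edges ws \<longrightarrow>
        dist_ge E (set vs) (set ws) (ln (real n) / ln (ln (real n)))) \<and>
     \<comment> \<open>P3\<close>
     (\<forall>l\<in>{3,5,7}. \<exists>vs. is_cycle n E vs \<and> length vs = l) \<and>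
     \<comment> \<open>P4\<close>
     (\<forall>c L S. conductance E c \<and> (\<forall>i j. E i j \<longrightarrow> C1 \<le> c i j \<and> c i j \<le> C2) \<and>
        L \<subseteq> {..<n} \<and> card L \<le> K \<and> S \<subseteq> {..<n} - L \<and> S \<noteq> {} \<and> real (card S) \<le> real n / 2 \<longrightarrow>
        (\<Sum>(i,j)\<in>{(i,j). i \<in> S \<and> j \<in> {..<n} - (L \<union> S) \<and> E i j}. c i j) /
        (\<Sum>i\<in>S. \<Sum>j\<in>{j. j \<in> {..<n} - L \<and> E i j}. c i j)
        \<ge> C1 / (6 * C2)) \<and>
     \<comment> \<open>P5\<close>
     (\<forall>i<n. \<delta> * C * ln (real n) < real (degree E i) \<and> real (degree E i) < 4 * C * ln (real n))"

text \<open>Harmonicity part of the potential distribution: Kirchhoff at every vertex outside \<Gamma>.\<close>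
definition harmonic_off :: "nat \<Rightarrow> (nat \<Rightarrow> nat \<Rightarrow> bool) \<Rightarrow> (nat \<Rightarrow> nat \<Rightarrow> real) \<Rightarrow> nat set \<Rightarrow>
    (nat \<Rightarrow> real) \<Rightarrow> bool" where
  "harmonic_off n E c \<Gamma> V \<longleftrightarrow>
     (\<forall>i<n. i \<notin> \<Gamma> \<longrightarrow> (\<Sum>j\<in>{j. j < n \<and> E i j}. c i j * (V i - V j)) = 0)"

end

theory Submission
  imports Defs
begin


definition wt :: "(nat \<Rightarrow> nat \<Rightarrow> bool) \<Rightarrow> (nat \<Rightarrow> nat \<Rightarrow> real) \<Rightarrow> nat \<Rightarrow> nat \<Rightarrow> real" where
  "wt E c i j = (if E i j then c i j else 0)"

lemma geom_le:
  fixes r :: real assumes "0 \<le> r" "r < 1"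
  shows "(\<Sum>j<k. r ^ j) \<le> 1 / (1 - r)"
proof -
  have "(\<Sum>j<k. r ^ j) = (1 - r ^ k) / (1 - r)" using assms by (simp add: sum_gp_strict)
  also have "\<dots> \<le> 1 / (1 - r)" using assms by (intro divide_right_mono) auto
  finally show ?thesis .
qed

locale net =
  fixes n :: nat and E :: "nat \<Rightarrow> nat \<Rightarrow> bool" and c :: "nat \<Rightarrow> nat \<Rightarrow> real" and G :: "nat set"
    and C1 C2 D0 Dmax :: real and K :: nat
  assumes sg: "simple_graph n E"
    and cond: "conductance E c"
    and cb: "\<And>i j. E i j \<Longrightarrow> C1 \<le> c i j \<and> c i j \<le> C2"
    and C1pos: "0 < C1" and C12: "C1 \<le> C2"
    and G_sub: "G \<subseteq> {..<n}" and cardG: "card G \<le> K" and K1: "1 \<le> K"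
    and deg: "\<And>i. i < n \<Longrightarrow> D0 < real (degree E i) \<and> real (degree E i) < Dmax"
    and KD: "2 * real K \<le> D0" and npos: "0 < n"
begin

abbreviation "w \<equiv> wt E c"
definition "V' = {..<n} - G"

lemma C2pos: "0 < C2" using C1pos C12 by linarith
lemma D0pos: "0 < D0" using KD K1 by linarith
lemma Dmaxpos: "0 < Dmax" using deg[OF npos] D0pos by linarith

lemma E_lt: "E i j \<Longrightarrow> i < n \<and> j < n" using sg unfolding simple_graph_def by blast
lemma E_sym: "E i j \<Longrightarrow> E j i" using sg unfolding simple_graph_def by blast

lemma w_nonneg: "0 \<le> w i j"
  using cb[of i j] C1pos by (auto simp: wt_def)

lemma w_le: "w i j \<le> C2"
  using cb[of i j] C2pos by (auto simp: wt_def)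

lemma w_sym: "w i j = w j i"
  using cond E_sym unfolding wt_def conductance_def by metis

lemma finV': "finite V'" unfolding V'_def by auto
lemma finG: "finite G" using G_sub finite_subset by blast
lemma V'_sub: "V' \<subseteq> {..<n}" unfolding V'_def by auto

lemma w_filter: "finite X \<Longrightarrow> (\<Sum>j\<in>X. w i j) = (\<Sum>j\<in>{j\<in>X. E i j}. c i j)"
  by (simp only: wt_def sum.inter_filter)

lemma deg_card: "i < n \<Longrightarrow> card {j\<in>{..<n}. E i j} = degree E i"
  unfolding degree_def using E_lt by (metis (no_types, lifting) Collect_cong lessThan_iff)

lemma row_full: "i < n \<Longrightarrow> (\<Sum>j\<in>{..<n}. w i j) \<le> C2 * Dmax"
proof -
  assume i: "i < n"
  have "(\<Sum>j\<in>{..<n}. w i j) = (\<Sum>j\<in>{j\<in>{..<n}. E i j}. c i j)"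
    by (rule w_filter) simp
  also have "\<dots> \<le> real (card {j\<in>{..<n}. E i j}) * C2"
    by (rule sum_bounded_above) (use cb in auto)
  also have "\<dots> \<le> Dmax * C2" using deg[OF i] deg_card[OF i] C2pos
    by (intro mult_right_mono) auto
  finally show ?thesis by (simp add: mult.commute)
qed

lemma colup:
  assumes "S \<subseteq> {..<n}" "U \<subseteq> {..<n}"
  shows "(\<Sum>i\<in>S. \<Sum>j\<in>U. w i j) \<le> C2 * Dmax * card U"
proof -
  have "(\<Sum>i\<in>S. \<Sum>j\<in>U. w i j) = (\<Sum>j\<in>U. \<Sum>i\<in>S. w i j)" by (rule sum.swap)
  also have "\<dots> = (\<Sum>j\<in>U. \<Sum>i\<in>S. w j i)" by (intro sum.cong refl) (rule w_sym)
  also have "\<dots> \<le> (\<Sum>j\<in>U. \<Sum>i\<in>{..<n}. w j i)"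
    using assms by (intro sum_mono sum_mono2) (auto simp: w_nonneg)
  also have "\<dots> \<le> (\<Sum>j\<in>U. C2 * Dmax)"
    using assms by (intro sum_mono row_full) auto
  also have "\<dots> = C2 * Dmax * card U" by simp
  finally show ?thesis .
qed

lemma rowup: "(\<Sum>j\<in>U. w i j) \<le> C2 * card U"
proof (cases "finite U")
  case True
  have "(\<Sum>j\<in>U. w i j) \<le> real (card U) * C2" by (rule sum_bounded_above) (rule w_le)
  thus ?thesis by (simp add: mult.commute)
next
  case False thus ?thesis using C2pos by simp
qed

lemma rowlow:
  assumes i: "i < n" and X: "X \<subseteq> {..<n}"
  shows "C1 * (real (degree E i) - real (card ({..<n} - X))) \<le> (\<Sum>j\<in>X. w i j)"
proof -
  have fX: "finite X" using X finite_subset by blast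
  have eq: "(\<Sum>j\<in>X. w i j) = (\<Sum>j\<in>{j\<in>X. E i j}. c i j)"
    using fX by (rule w_filter)
  have lb: "real (card {j\<in>X. E i j}) * C1 \<le> (\<Sum>j\<in>{j\<in>X. E i j}. c i j)"
    by (rule sum_bounded_below) (use cb in auto)
  have sub: "{j. E i j} \<subseteq> {j\<in>X. E i j} \<union> ({..<n} - X)" using E_lt by auto
  have "degree E i \<le> card ({j\<in>X. E i j} \<union> ({..<n} - X))"
    unfolding degree_def using fX by (intro card_mono[OF _ sub]) auto
  also have "\<dots> \<le> card {j\<in>X. E i j} + card ({..<n} - X)" by (rule card_Un_le)
  finally have "real (degree E i) - real (card ({..<n} - X)) \<le> real (card {j\<in>X. E i j})" by linarith
  hence "C1 * (real (degree E i) - real (card ({..<n} - X))) \<le> C1 * real (card {j\<in>X. E i j})"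
    using C1pos by (intro mult_left_mono) auto
  with lb eq show ?thesis by (simp add: mult.commute)
qed

lemma antisym0:
  assumes "finite S"
  shows "(\<Sum>i\<in>S. \<Sum>j\<in>S. w i j * (f i - f j)) = (0::real)"
proof -
  let ?X = "(\<Sum>i\<in>S. \<Sum>j\<in>S. w i j * (f i - f j))"
  have "?X = (\<Sum>j\<in>S. \<Sum>i\<in>S. w i j * (f i - f j))" by (rule sum.swap)
  also have "\<dots> = (\<Sum>j\<in>S. \<Sum>i\<in>S. - (w j i * (f j - f i)))"
    by (intro sum.cong refl) (metis w_sym minus_diff_eq mult_minus_right)
  also have "\<dots> = - ?X" by (simp add: sum_negf)
  finally show ?thesis by linarith
qed

lemma flow:
  assumes "S \<subseteq> V'"
  shows "(\<Sum>i\<in>S. \<Sum>j\<in>V'. w i j * (f i - f j)) = (\<Sum>i\<in>S. \<Sum>j\<in>V' - S. w i j * (f i - f j))"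
proof -
  have fS: "finite S" using assms finV' finite_subset by blast
  have "(\<Sum>i\<in>S. \<Sum>j\<in>V'. w i j * (f i - f j)) =
        (\<Sum>i\<in>S. (\<Sum>j\<in>V' - S. w i j * (f i - f j)) + (\<Sum>j\<in>S. w i j * (f i - f j)))"
    by (intro sum.cong refl sum.subset_diff assms finV')
  also have "\<dots> = (\<Sum>i\<in>S. \<Sum>j\<in>V' - S. w i j * (f i - f j)) + (\<Sum>i\<in>S. \<Sum>j\<in>S. w i j * (f i - f j))"
    by (rule sum.distrib)
  also have "\<dots> = (\<Sum>i\<in>S. \<Sum>j\<in>V' - S. w i j * (f i - f j))" using antisym0[OF fS] by simp
  finally show ?thesis .
qed

end


context net begin

lemma step:
  fixes f :: "nat \<Rightarrow> real" and t h :: real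
  assumes h: "0 < h"
    and H6: "\<And>i. i \<in> V' \<Longrightarrow> (\<Sum>j\<in>V'. w i j * (f i - f j)) \<le> (\<Sum>j\<in>G. w i j)"
  defines "S \<equiv> {i\<in>V'. t \<le> f i}" and "T \<equiv> {i\<in>V'. t - h \<le> f i}"
  shows "(\<Sum>i\<in>S. \<Sum>j\<in>V' - S. w i j) \<le> (\<Sum>i\<in>S. \<Sum>j\<in>G. w i j) / h + (\<Sum>i\<in>S. \<Sum>j\<in>T - S. w i j)"
proof -
  have SV: "S \<subseteq> V'" and ST: "S \<subseteq> T" and TV: "T \<subseteq> V'" using h unfolding S_def T_def by auto
  have split: "(\<Sum>j\<in>V' - S. w i j) = (\<Sum>j\<in>V' - T. w i j) + (\<Sum>j\<in>T - S. w i j)" for i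
  proof -
    have "(\<Sum>j\<in>V' - S. w i j) = (\<Sum>j\<in>(V' - S) - (T - S). w i j) + (\<Sum>j\<in>T - S. w i j)"
      using TV finV' by (intro sum.subset_diff) auto
    moreover have "(V' - S) - (T - S) = V' - T" using ST TV by auto
    ultimately show ?thesis by simp
  qed
  have p1: "(\<Sum>i\<in>S. \<Sum>j\<in>V' - T. w i j) \<le> (\<Sum>i\<in>S. \<Sum>j\<in>V' - T. w i j * (f i - f j) / h)"
  proof (intro sum_mono)
    fix i j assume i: "i \<in> S" and j: "j \<in> V' - T"
    have "1 \<le> (f i - f j) / h" using i j h unfolding S_def T_def by (auto simp: field_simps)
    hence "w i j * 1 \<le> w i j * ((f i - f j) / h)" by (intro mult_left_mono w_nonneg)
    thus "w i j \<le> w i j * (f i - f j) / h" by simp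
  qed
  also have "\<dots> = (\<Sum>i\<in>S. \<Sum>j\<in>V' - T. w i j * (f i - f j)) / h"
    by (simp add: sum_divide_distrib)
  also have "\<dots> \<le> (\<Sum>i\<in>S. \<Sum>j\<in>V' - S. w i j * (f i - f j)) / h"
  proof (intro divide_right_mono sum_mono sum_mono2)
    fix i j assume i: "i \<in> S" and j: "j \<in> (V' - S) - (V' - T)"
    have "0 \<le> f i - f j" using i j unfolding S_def by auto
    thus "0 \<le> w i j * (f i - f j)" by (intro mult_nonneg_nonneg w_nonneg)
  qed (use finV' ST h in auto)
  also have "\<dots> = (\<Sum>i\<in>S. \<Sum>j\<in>V'. w i j * (f i - f j)) / h" using flow[OF SV] by simp
  also have "\<dots> \<le> (\<Sum>i\<in>S. \<Sum>j\<in>G. w i j) / h"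
    using h SV by (intro divide_right_mono sum_mono H6) auto
  finally have "(\<Sum>i\<in>S. \<Sum>j\<in>V' - T. w i j) \<le> (\<Sum>i\<in>S. \<Sum>j\<in>G. w i j) / h" .
  moreover have "(\<Sum>i\<in>S. \<Sum>j\<in>V' - S. w i j) = (\<Sum>i\<in>S. \<Sum>j\<in>V' - T. w i j) + (\<Sum>i\<in>S. \<Sum>j\<in>T - S. w i j)"
    by (simp add: split sum.distrib)
  ultimately show ?thesis by linarith
qed

lemma cutlow:
  assumes SV: "S \<subseteq> V'"
  shows "real (card S) * (C1 * (D0 / 2 - real (card S))) \<le> (\<Sum>i\<in>S. \<Sum>j\<in>V' - S. w i j)"
proof (rule sum_bounded_below)
  fix i assume i: "i \<in> S"
  have fS: "finite S" using SV finV' finite_subset by blast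
  have iN: "i < n" using i SV V'_sub by auto
  have "{..<n} - (V' - S) \<subseteq> G \<union> S" unfolding V'_def by auto
  hence "card ({..<n} - (V' - S)) \<le> card (G \<union> S)" using finG fS by (intro card_mono) auto
  also have "\<dots> \<le> card G + card S" by (rule card_Un_le)
  finally have cc: "real (card ({..<n} - (V' - S))) \<le> real K + real (card S)" using cardG by linarith
  have "D0 / 2 - real (card S) \<le> real (degree E i) - real (card ({..<n} - (V' - S)))"
    using cc deg[OF iN] KD by linarith
  hence "C1 * (D0 / 2 - real (card S)) \<le> C1 * (real (degree E i) - real (card ({..<n} - (V' - S))))"
    using C1pos by (intro mult_left_mono) auto
  also have "\<dots> \<le> (\<Sum>j\<in>V' - S. w i j)" using V'_sub by (intro rowlow iN) auto
  finally show "C1 * (D0 / 2 - real (card S)) \<le> (\<Sum>j\<in>V' - S. w i j)" .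
qed

lemma vollow:
  assumes SV: "S \<subseteq> V'"
  shows "real (card S) * (C1 * (D0 / 2)) \<le> (\<Sum>i\<in>S. \<Sum>j\<in>V'. w i j)"
proof (rule sum_bounded_below)
  fix i assume i: "i \<in> S"
  have iN: "i < n" using i SV V'_sub by auto
  have "{..<n} - V' \<subseteq> G" unfolding V'_def by auto
  hence "card ({..<n} - V') \<le> card G" using finG by (intro card_mono) auto
  hence cc: "real (card ({..<n} - V')) \<le> real K" using cardG by linarith
  have "D0 / 2 \<le> real (degree E i) - real (card ({..<n} - V'))"
    using cc deg[OF iN] KD by linarith
  hence "C1 * (D0 / 2) \<le> C1 * (real (degree E i) - real (card ({..<n} - V')))"
    using C1pos by (intro mult_left_mono) auto
  also have "\<dots> \<le> (\<Sum>j\<in>V'. w i j)" using V'_sub by (intro rowlow iN) auto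
  finally show "C1 * (D0 / 2) \<le> (\<Sum>j\<in>V'. w i j)" .
qed

lemma Bsmall: "(\<Sum>i\<in>S. \<Sum>j\<in>G. w i j) \<le> real (card S) * (C2 * real K)"
proof (cases "finite S")
  case True
  show ?thesis
  proof (rule sum_bounded_above)
    fix i show "(\<Sum>j\<in>G. w i j) \<le> C2 * real K"
      using rowup[of i G] cardG C2pos by (smt (verit) mult_left_mono of_nat_mono)
  qed
next
  case False thus ?thesis by simp
qed

lemma Bbig: "S \<subseteq> {..<n} \<Longrightarrow> (\<Sum>i\<in>S. \<Sum>j\<in>G. w i j) \<le> C2 * Dmax * real K"
proof -
  assume S: "S \<subseteq> {..<n}"
  have "(\<Sum>i\<in>S. \<Sum>j\<in>G. w i j) \<le> C2 * Dmax * card G" by (rule colup[OF S G_sub])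
  also have "\<dots> \<le> C2 * Dmax * real K"
  proof (rule mult_left_mono)
    show "real (card G) \<le> real K" using cardG by simp
    show "0 \<le> C2 * Dmax" using C2pos Dmaxpos by simp
  qed
  finally show ?thesis .
qed

end


locale net2 = net +
  fixes \<phi> :: real
  assumes phipos: "0 < \<phi>"
    and P4: "\<And>S. S \<subseteq> {..<n} - G \<Longrightarrow> S \<noteq> {} \<Longrightarrow> 2 * real (card S) \<le> real n \<Longrightarrow>
        \<phi> * (\<Sum>i\<in>S. \<Sum>j\<in>{..<n} - G. w i j) \<le> (\<Sum>i\<in>S. \<Sum>j\<in>({..<n} - G) - S. w i j)"
begin

definition g :: "(nat \<Rightarrow> real) \<Rightarrow> real \<Rightarrow> nat" where
  "g f t = card {i\<in>V'. t \<le> f i}"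

lemma g_mono: "t' \<le> t \<Longrightarrow> g f t \<le> g f t'"
  unfolding g_def using finV' by (intro card_mono) auto

lemma g_le: "g f t \<le> n"
proof -
  have "g f t \<le> card {..<n}" unfolding g_def using V'_sub by (intro card_mono) auto
  thus ?thesis by simp
qed

lemma sumST: "(\<Sum>i\<in>S. \<Sum>j\<in>U. w i j) \<le> real (card S) * (C2 * real (card U))"
proof (cases "finite S")
  case True thus ?thesis by (intro sum_bounded_above rowup)
qed simp

lemma GA:
  fixes f :: "nat \<Rightarrow> real" and t :: real
  assumes H6: "\<And>i. i \<in> V' \<Longrightarrow> (\<Sum>j\<in>V'. w i j * (f i - f j)) \<le> (\<Sum>j\<in>G. w i j)"
    and g1: "1 \<le> g f t"
  shows "C1 * (D0/2) / (4 * C2) \<le> real (g f (t - 4 * C2 * real K / (C1 * (D0/2))))"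
proof -
  define D1 where "D1 = D0 / 2"
  define hA where "hA = 4 * C2 * real K / (C1 * D1)"
  define S where "S = {i\<in>V'. t \<le> f i}"
  define T where "T = {i\<in>V'. t - hA \<le> f i}"
  have D1pos: "0 < D1" using D0pos D1_def by simp
  have hApos: "0 < hA" unfolding hA_def using C1pos C2pos K1 D1pos by simp
  have SV: "S \<subseteq> V'" and ST: "S \<subseteq> T" and TV: "T \<subseteq> V'" using hApos unfolding S_def T_def by auto
  have fS: "finite S" using SV finV' finite_subset by blast
  have fT: "finite T" using TV finV' finite_subset by blast
  define s where "s = real (card S)"
  have s1: "1 \<le> s" using g1 unfolding s_def S_def g_def by simp
  have gT: "g f (t - hA) = card T" unfolding g_def T_def by simp
  show ?thesis
  proof (cases "D1 / 2 < s")
    case True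
    have "C1 * D1 / (4 * C2) \<le> D1 / 4" using C12 C1pos D1pos by (simp add: field_simps)
    moreover have "s \<le> card T" unfolding s_def using card_mono[OF fT ST] by simp
    ultimately show ?thesis using True gT unfolding D1_def hA_def by simp
  next
    case False
    have c1: "s * (C1 * (D1 - s)) \<le> (\<Sum>i\<in>S. \<Sum>j\<in>V' - S. w i j)"
      using cutlow[OF SV] unfolding s_def D1_def by simp
    have c2: "(\<Sum>i\<in>S. \<Sum>j\<in>V' - S. w i j) \<le> (\<Sum>i\<in>S. \<Sum>j\<in>G. w i j) / hA + (\<Sum>i\<in>S. \<Sum>j\<in>T - S. w i j)"
      unfolding S_def T_def by (rule step[OF hApos H6])
    have c3: "(\<Sum>i\<in>S. \<Sum>j\<in>G. w i j) / hA \<le> s * (C2 * real K) / hA"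
      using Bsmall[of S] hApos unfolding s_def by (intro divide_right_mono) auto
    have c4: "s * (C2 * real K) / hA = s * (C1 * D1 / 4)"
      unfolding hA_def using C1pos C2pos K1 D1pos by (simp add: field_simps)
    have c5: "(\<Sum>i\<in>S. \<Sum>j\<in>T - S. w i j) \<le> s * (C2 * real (card (T - S)))"
      using sumST unfolding s_def .
    have "s * (C1 * (D1 - s)) \<le> s * (C1 * D1 / 4 + C2 * real (card (T - S)))"
      using c1 c2 c3 c4 c5 by (simp add: algebra_simps)
    hence c6: "C1 * (D1 - s) \<le> C1 * D1 / 4 + C2 * real (card (T - S))"
      using s1 by simp
    have "C1 * (D1 / 2) \<le> C1 * (D1 - s)" using False C1pos by (intro mult_left_mono) auto
    with c6 have "C1 * D1 / 4 \<le> C2 * real (card (T - S))" by simp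
    hence "C1 * D1 / (4 * C2) \<le> real (card (T - S))" using C2pos by (simp add: field_simps)
    moreover have "card (T - S) \<le> card T" using fT by (intro card_mono) auto
    ultimately show ?thesis using gT unfolding D1_def hA_def by simp
  qed
qed

lemma GB:
  fixes f :: "nat \<Rightarrow> real" and t :: real
  assumes H6: "\<And>i. i \<in> V' \<Longrightarrow> (\<Sum>j\<in>V'. w i j * (f i - f j)) \<le> (\<Sum>j\<in>G. w i j)"
    and g1: "1 \<le> g f t" and g2: "2 * real (g f t) \<le> real n"
  shows "(1 + \<phi> * C1 * (D0/2) / (2 * C2 * Dmax)) * real (g f t)
           \<le> real (g f (t - 2 * (C2 * Dmax * real K) / (\<phi> * C1 * (D0/2) * real (g f t))))"
proof -
  define D1 where "D1 = D0 / 2"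
  define s where "s = real (g f t)"
  define h where "h = 2 * (C2 * Dmax * real K) / (\<phi> * C1 * D1 * s)"
  define S where "S = {i\<in>V'. t \<le> f i}"
  define T where "T = {i\<in>V'. t - h \<le> f i}"
  have D1pos: "0 < D1" using D0pos D1_def by simp
  have s1: "1 \<le> s" using g1 s_def by simp
  have hpos: "0 < h" unfolding h_def using C1pos C2pos K1 D1pos s1 phipos Dmaxpos by simp
  have SV: "S \<subseteq> V'" and ST: "S \<subseteq> T" and TV: "T \<subseteq> V'" using hpos unfolding S_def T_def by auto
  have fS: "finite S" using SV finV' finite_subset by blast
  have fT: "finite T" using TV finV' finite_subset by blast
  have sS: "s = real (card S)" unfolding s_def S_def g_def by simp
  have gT: "g f (t - h) = card T" unfolding g_def T_def by simp
  have Sne: "S \<noteq> {}" using s1 sS by auto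
  have c0: "\<phi> * (\<Sum>i\<in>S. \<Sum>j\<in>V'. w i j) \<le> (\<Sum>i\<in>S. \<Sum>j\<in>V' - S. w i j)"
    using P4[of S] SV Sne g2 sS unfolding V'_def s_def by simp
  have c1: "\<phi> * (s * (C1 * D1)) \<le> \<phi> * (\<Sum>i\<in>S. \<Sum>j\<in>V'. w i j)"
    using vollow[OF SV] phipos unfolding sS D1_def by (intro mult_left_mono) auto
  have c2: "(\<Sum>i\<in>S. \<Sum>j\<in>V' - S. w i j) \<le> (\<Sum>i\<in>S. \<Sum>j\<in>G. w i j) / h + (\<Sum>i\<in>S. \<Sum>j\<in>T - S. w i j)"
    unfolding S_def T_def by (rule step[OF hpos H6])
  have c3: "(\<Sum>i\<in>S. \<Sum>j\<in>G. w i j) / h \<le> (C2 * Dmax * real K) / h"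
    using Bbig[of S] hpos SV V'_sub by (intro divide_right_mono) auto
  have c4: "(C2 * Dmax * real K) / h = \<phi> * (s * (C1 * D1)) / 2"
    unfolding h_def using C1pos C2pos K1 D1pos s1 phipos Dmaxpos by (simp add: field_simps)
  have c5: "(\<Sum>i\<in>S. \<Sum>j\<in>T - S. w i j) \<le> C2 * Dmax * real (card (T - S))"
    using SV TV V'_sub by (intro colup) auto
  have "\<phi> * (s * (C1 * D1)) / 2 \<le> C2 * Dmax * real (card (T - S))"
    using c0 c1 c2 c3 c4 c5 by linarith
  hence c6: "\<phi> * C1 * D1 / (2 * C2 * Dmax) * s \<le> real (card (T - S))"
    using C2pos Dmaxpos by (simp add: field_simps)
  have "card T = card S + card (T - S)"
    using fT ST by (metis card_Diff_subset card_mono finite_subset le_add_diff_inverse)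
  hence "real (card T) = s + real (card (T - S))" using sS by simp
  with c6 have "(1 + \<phi> * C1 * D1 / (2 * C2 * Dmax)) * s \<le> real (card T)" by (simp add: algebra_simps)
  thus ?thesis using gT unfolding D1_def h_def s_def by simp
qed

end


context net2 begin

lemma top:
  fixes f :: "nat \<Rightarrow> real"
  assumes H6: "\<And>i. i \<in> V' \<Longrightarrow> (\<Sum>j\<in>V'. w i j * (f i - f j)) \<le> (\<Sum>j\<in>G. w i j)"
    and Vne: "V' \<noteq> {}" and A0ge: "1 \<le> C1 * (D0/2) / (4 * C2)"
  defines "\<rho> \<equiv> \<phi> * C1 * (D0/2) / (2 * C2 * Dmax)"
  shows "\<exists>t. real n < 2 * real (card {i\<in>V'. t \<le> f i}) \<and>
     (\<forall>i\<in>V'. f i \<le> t + (4 * C2 * real K / (C1 * (D0/2)) +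
        2 * (C2 * Dmax * real K) / (\<phi> * C1 * (D0/2) * (C1 * (D0/2) / (4 * C2))) * ((1 + \<rho>) / \<rho>)))"
proof -
  define D1 where "D1 = D0 / 2"
  define A0 where "A0 = C1 * D1 / (4 * C2)"
  define hA where "hA = 4 * C2 * real K / (C1 * D1)"
  define B0 where "B0 = C2 * Dmax * real K"
  define cf where "cf = 2 * B0 / (\<phi> * C1 * D1 * A0)"
  define q where "q = 1 + \<rho>"
  define tmax where "tmax = Max (f ` V')"
  define \<tau> where "\<tau> k = tmax - hA - cf * (\<Sum>j<k. (1/q)^j)" for k
  have D1pos: "0 < D1" using D0pos D1_def by simp
  have rhopos: "0 < \<rho>" unfolding \<rho>_def using phipos C1pos C2pos D0pos Dmaxpos by simp
  have q1: "1 < q" using rhopos q_def by simp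
  have A01: "1 \<le> A0" using A0ge unfolding A0_def D1_def .
  have B0pos: "0 < B0" unfolding B0_def using C2pos Dmaxpos K1 by simp
  have cfpos: "0 \<le> cf" unfolding cf_def using B0pos phipos C1pos D1pos A01 by simp
  have fim: "finite (f ` V')" using finV' by simp
  have tmax_ge: "f i \<le> tmax" if "i \<in> V'" for i unfolding tmax_def using fim that by simp
  have "tmax \<in> f ` V'" unfolding tmax_def using fim Vne by (intro Max_in) auto
  then obtain i0 where i0: "i0 \<in> V'" "f i0 = tmax" by auto
  have "g f tmax \<ge> 1"
  proof -
    have "i0 \<in> {i\<in>V'. tmax \<le> f i}" using i0 by simp
    moreover have "finite {i\<in>V'. tmax \<le> f i}" using finV' by simp
    ultimately have "card {i\<in>V'. tmax \<le> f i} \<noteq> 0" by auto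
    thus ?thesis unfolding g_def by simp
  qed
  have GA': "A0 \<le> real (g f (tmax - hA))"
    using GA[OF H6 \<open>g f tmax \<ge> 1\<close>] unfolding A0_def hA_def D1_def .
  have claim: "real n < 2 * real (g f (\<tau> k)) \<or> A0 * q ^ k \<le> real (g f (\<tau> k))" for k
  proof (induction k)
    case 0
    thus ?case using GA' unfolding \<tau>_def by simp
  next
    case (Suc k)
    have tauS: "\<tau> (Suc k) = \<tau> k - cf * (1/q)^k" unfolding \<tau>_def by (simp add: algebra_simps)
    have tle: "\<tau> (Suc k) \<le> \<tau> k" using tauS cfpos q1 by simp
    show ?case
    proof (cases "real n < 2 * real (g f (\<tau> k))")
      case True
      have "g f (\<tau> k) \<le> g f (\<tau> (Suc k))" by (rule g_mono[OF tle])
      thus ?thesis using True by simp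
    next
      case False
      define s where "s = real (g f (\<tau> k))"
      have sge: "A0 * q ^ k \<le> s" using Suc False s_def by simp
      have qk: "1 \<le> q ^ k" using q1 by simp
      have "1 \<le> A0 * q ^ k" using A01 qk by (metis mult_mono' less_eq_real_def mult_1_left zero_le_one)
      hence s1: "1 \<le> s" using sge by simp
      hence g1: "1 \<le> g f (\<tau> k)" using s_def by simp
      have g2: "2 * real (g f (\<tau> k)) \<le> real n" using False by simp
      define hs where "hs = 2 * (C2 * Dmax * real K) / (\<phi> * C1 * (D0/2) * real (g f (\<tau> k)))"
      have gb: "(1 + \<rho>) * s \<le> real (g f (\<tau> k - hs))"
        using GB[OF H6 g1 g2] unfolding s_def hs_def \<rho>_def .
      have hs_eq: "hs = 2 * B0 / (\<phi> * C1 * D1) / s" unfolding hs_def B0_def D1_def s_def by simp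
      have cfk: "cf * (1/q)^k = 2 * B0 / (\<phi> * C1 * D1) / (A0 * q ^ k)"
        unfolding cf_def by (simp add: power_one_over field_simps)
      have pos1: "0 \<le> 2 * B0 / (\<phi> * C1 * D1)" using B0pos phipos C1pos D1pos by simp
      have "hs \<le> cf * (1/q)^k" unfolding hs_eq cfk
        using sge pos1 \<open>1 \<le> A0 * q ^ k\<close> by (intro divide_left_mono) auto
      hence "\<tau> (Suc k) \<le> \<tau> k - hs" using tauS by simp
      hence "g f (\<tau> k - hs) \<le> g f (\<tau> (Suc k))" by (rule g_mono)
      with gb have "(1 + \<rho>) * s \<le> real (g f (\<tau> (Suc k)))" by linarith
      moreover have "A0 * q ^ Suc k \<le> (1 + \<rho>) * s"
      proof -
        have "A0 * q ^ Suc k = q * (A0 * q ^ k)" by simp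
        also have "\<dots> \<le> q * s" using sge q1 by (intro mult_left_mono) auto
        finally show ?thesis using q_def by simp
      qed
      ultimately show ?thesis by simp
    qed
  qed
  obtain k where k: "real n < q ^ k" using real_arch_pow[OF q1] by blast
  have "q ^ k \<le> A0 * q ^ k" using A01 q1 by simp
  hence "\<not> A0 * q ^ k \<le> real (g f (\<tau> k))" using k g_le[of f "\<tau> k"] by linarith
  hence c1: "real n < 2 * real (g f (\<tau> k))" using claim[of k] by blast
  have "(\<Sum>j<k. (1/q)^j) \<le> 1 / (1 - 1/q)" using q1 by (intro geom_le) auto
  also have "1 / (1 - 1/q) = (1 + \<rho>) / \<rho>" using q_def rhopos by (simp add: field_simps)
  finally have "cf * (\<Sum>j<k. (1/q)^j) \<le> cf * ((1 + \<rho>) / \<rho>)" using cfpos by (intro mult_left_mono) auto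
  hence c2: "tmax \<le> \<tau> k + (hA + cf * ((1 + \<rho>) / \<rho>))" unfolding \<tau>_def by simp
  show ?thesis
  proof (intro exI conjI ballI)
    show "real n < 2 * real (card {i\<in>V'. \<tau> k \<le> f i})" using c1 unfolding g_def .
    fix i assume "i \<in> V'"
    hence "f i \<le> tmax" by (rule tmax_ge)
    with c2 show "f i \<le> \<tau> k + (4 * C2 * real K / (C1 * (D0/2)) +
        2 * (C2 * Dmax * real K) / (\<phi> * C1 * (D0/2) * (C1 * (D0/2) / (4 * C2))) * ((1 + \<rho>) / \<rho>))"
      unfolding hA_def cf_def B0_def A0_def D1_def by simp
  qed
qed

end


lemma maxp:
  assumes sg: "simple_graph n E" and cond: "conductance E c" and conn: "connected_graph n E"
    and Gs: "G \<subseteq> {..<n}" and Gne: "G \<noteq> {}" and harm: "harmonic_off n E c G V"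
    and b: "\<forall>j\<in>G. V j \<le> 1"
  shows "\<forall>i<n. V i \<le> 1"
proof (rule ccontr)
  assume "\<not> (\<forall>i<n. V i \<le> 1)"
  then obtain i1 where i1: "i1 < n" "1 < V i1" by auto
  define Mx where "Mx = Max (V ` {..<n})"
  have fin: "finite (V ` {..<n})" by simp
  have Mge: "V j \<le> Mx" if "j < n" for j unfolding Mx_def using fin that by simp
  have "Mx \<in> V ` {..<n}" unfolding Mx_def using i1 by (intro Max_in fin) auto
  then obtain i0 where i0: "i0 < n" "V i0 = Mx" by auto
  have M1: "1 < Mx" using Mge[OF i1(1)] i1 by simp
  have closed: "V j = Mx" if i: "i < n" "V i = Mx" and e: "E i j" for i j
  proof -
    have jn: "j < n" using sg e unfolding simple_graph_def by blast
    have iG: "i \<notin> G" using b i M1 by auto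
    have h0: "(\<Sum>j\<in>{j. j < n \<and> E i j}. c i j * (V i - V j)) = 0"
      using harm i iG unfolding harmonic_off_def by blast
    have nn: "\<forall>j'\<in>{j. j < n \<and> E i j}. 0 \<le> c i j' * (V i - V j')"
    proof
      fix j' assume "j' \<in> {j. j < n \<and> E i j}"
      hence "0 < c i j'" "V j' \<le> V i" using cond Mge i unfolding conductance_def by auto
      thus "0 \<le> c i j' * (V i - V j')" by simp
    qed
    have "\<forall>j'\<in>{j. j < n \<and> E i j}. c i j' * (V i - V j') = 0"
      using sum_nonneg_eq_0_iff[of "{j. j < n \<and> E i j}" "\<lambda>j'. c i j' * (V i - V j')"] h0 nn by simp
    hence "c i j * (V i - V j) = 0" using jn e by simp
    moreover have "0 < c i j" using cond e unfolding conductance_def by auto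
    ultimately show ?thesis using i by simp
  qed
  have reach: "E\<^sup>*\<^sup>* i0 y \<Longrightarrow> y < n \<and> V y = Mx" for y
  proof (induction rule: rtranclp_induct)
    case base thus ?case using i0 by simp
  next
    case (step y z)
    have "z < n" using sg step(2) unfolding simple_graph_def by blast
    thus ?case using closed step by blast
  qed
  obtain g0 where g0: "g0 \<in> G" using Gne by auto
  have "E\<^sup>*\<^sup>* i0 g0" using conn i0 g0 Gs unfolding connected_graph_def by auto
  hence "V g0 = Mx" using reach by blast
  thus False using b g0 M1 by auto
qed

lemma harm_neg: "harmonic_off n E c G V \<Longrightarrow> harmonic_off n E c G (\<lambda>i. 1 - V i)"
  unfolding harmonic_off_def by (simp add: algebra_simps sum_subtractf sum_negf)

lemma sum_w_conv:
  "(\<Sum>j\<in>{j. j < n \<and> E i j}. c i j * h j) = (\<Sum>j\<in>{..<n}. wt E c i j * h j)"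
proof -
  have "{j. j < n \<and> E i j} = {j\<in>{..<n}. E i j}" by auto
  hence "(\<Sum>j\<in>{j. j < n \<and> E i j}. c i j * h j) = (\<Sum>j\<in>{..<n}. if E i j then c i j * h j else 0)"
    by (simp only: sum.inter_filter[OF finite_lessThan])
  also have "\<dots> = (\<Sum>j\<in>{..<n}. wt E c i j * h j)" by (intro sum.cong refl) (simp add: wt_def)
  finally show ?thesis .
qed

context net begin

lemma harm_row:
  assumes harm: "harmonic_off n E c G V" and i: "i \<in> V'"
  shows "(\<Sum>j\<in>V'. w i j * (V i - V j)) + (\<Sum>j\<in>G. w i j * (V i - V j)) = 0"
proof -
  have "(\<Sum>j\<in>{j. j < n \<and> E i j}. c i j * (V i - V j)) = 0"
    using harm i unfolding harmonic_off_def V'_def by blast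
  hence "(\<Sum>j\<in>{..<n}. w i j * (V i - V j)) = 0" using sum_w_conv[where h="\<lambda>j. V i - V j" and n=n and E=E and c=c and i=i] by simp
  moreover have "(\<Sum>j\<in>{..<n}. w i j * (V i - V j)) = (\<Sum>j\<in>V'. w i j * (V i - V j)) + (\<Sum>j\<in>G. w i j * (V i - V j))"
    unfolding V'_def by (intro sum.subset_diff G_sub) simp
  ultimately show ?thesis by simp
qed

lemma harm_total:
  assumes harm: "harmonic_off n E c G V"
  shows "(\<Sum>i\<in>V'. \<Sum>j\<in>G. w i j * (V i - V j)) = 0"
proof -
  have "(\<Sum>i\<in>V'. \<Sum>j\<in>G. w i j * (V i - V j)) = (\<Sum>i\<in>V'. - (\<Sum>j\<in>V'. w i j * (V i - V j)))"
    using harm_row[OF harm] by (intro sum.cong refl) (simp add: eq_neg_iff_add_eq_0 add.commute)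
  also have "\<dots> = - (\<Sum>i\<in>V'. \<Sum>j\<in>V'. w i j * (V i - V j))" by (simp add: sum_negf)
  also have "\<dots> = 0" using antisym0[OF finV'] by simp
  finally show ?thesis .
qed

end



context net2 begin

definition "Bx = (let \<rho> = \<phi> * C1 * (D0/2) / (2 * C2 * Dmax) in
   4 * C2 * real K / (C1 * (D0/2)) +
        2 * (C2 * Dmax * real K) / (\<phi> * C1 * (D0/2) * (C1 * (D0/2) / (4 * C2))) * ((1 + \<rho>) / \<rho>))"

lemma spread:
  assumes harm: "harmonic_off n E c G V" and V01: "\<And>i. i < n \<Longrightarrow> 0 \<le> V i \<and> V i \<le> 1"
    and Vne: "V' \<noteq> {}" and A0ge: "1 \<le> C1 * (D0/2) / (4 * C2)"
  shows "\<exists>lo. \<forall>j\<in>V'. lo \<le> V j \<and> V j \<le> lo + 2 * Bx"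
proof -
  have Gn: "j \<in> G \<Longrightarrow> j < n" for j using G_sub by auto
  have Vn: "j \<in> V' \<Longrightarrow> j < n" for j using V'_sub by auto
  have H1: "(\<Sum>j\<in>V'. w i j * (V i - V j)) \<le> (\<Sum>j\<in>G. w i j)" if i: "i \<in> V'" for i
  proof -
    have "(\<Sum>j\<in>V'. w i j * (V i - V j)) = - (\<Sum>j\<in>G. w i j * (V i - V j))"
      using harm_row[OF harm i] by (simp add: eq_neg_iff_add_eq_0)
    also have "\<dots> = (\<Sum>j\<in>G. w i j * (V j - V i))" by (simp add: sum_negf[symmetric] algebra_simps)
    also have "\<dots> \<le> (\<Sum>j\<in>G. w i j)"
    proof (rule sum_mono)
      fix j assume j: "j \<in> G"
      have "V j - V i \<le> 1" using V01[OF Gn[OF j]] V01[OF Vn[OF i]] by simp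
      hence "w i j * (V j - V i) \<le> w i j * 1" by (intro mult_left_mono w_nonneg)
      thus "w i j * (V j - V i) \<le> w i j" by simp
    qed
    finally show ?thesis .
  qed
  have H2: "(\<Sum>j\<in>V'. w i j * ((- V i) - (- V j))) \<le> (\<Sum>j\<in>G. w i j)" if i: "i \<in> V'" for i
  proof -
    have "(\<Sum>j\<in>V'. w i j * ((- V i) - (- V j))) = - (\<Sum>j\<in>V'. w i j * (V i - V j))"
      by (simp add: sum_negf[symmetric] algebra_simps)
    also have "\<dots> = (\<Sum>j\<in>G. w i j * (V i - V j))"
      using harm_row[OF harm i] by (simp add: eq_neg_iff_add_eq_0)
    also have "\<dots> \<le> (\<Sum>j\<in>G. w i j)"
    proof (rule sum_mono)
      fix j assume j: "j \<in> G"
      have "V i - V j \<le> 1" using V01[OF Gn[OF j]] V01[OF Vn[OF i]] by simp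
      hence "w i j * (V i - V j) \<le> w i j * 1" by (intro mult_left_mono w_nonneg)
      thus "w i j * (V i - V j) \<le> w i j" by simp
    qed
    finally show ?thesis .
  qed
  obtain t1 where t1: "real n < 2 * real (card {i\<in>V'. t1 \<le> V i})" "\<forall>i\<in>V'. V i \<le> t1 + Bx"
    using top[where f=V, OF H1 Vne A0ge] unfolding Bx_def Let_def by blast
  obtain t2 where t2: "real n < 2 * real (card {i\<in>V'. t2 \<le> - V i})" "\<forall>i\<in>V'. - V i \<le> t2 + Bx"
    using top[where f="\<lambda>i. - V i", OF H2 Vne A0ge] unfolding Bx_def Let_def by blast
  define A1 where "A1 = {i\<in>V'. t1 \<le> V i}"
  define A2 where "A2 = {i\<in>V'. t2 \<le> - V i}"
  have "A1 \<inter> A2 \<noteq> {}"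
  proof
    assume dis: "A1 \<inter> A2 = {}"
    have f1: "finite A1" "finite A2" unfolding A1_def A2_def using finV' by auto
    have "card (A1 \<union> A2) = card A1 + card A2" using dis f1 by (intro card_Un_disjoint) auto
    moreover have "card (A1 \<union> A2) \<le> card {..<n}" unfolding A1_def A2_def using V'_sub
      by (intro card_mono) auto
    ultimately have "real (card A1) + real (card A2) \<le> real n" by simp
    thus False using t1(1) t2(1) unfolding A1_def A2_def by linarith
  qed
  then obtain i2 where i2: "i2 \<in> V'" "t1 \<le> V i2" "t2 \<le> - V i2" unfolding A1_def A2_def by auto
  show ?thesis
  proof (intro exI[of _ "t1 - Bx"] ballI conjI)
    fix j assume j: "j \<in> V'"
    show "V j \<le> t1 - Bx + 2 * Bx" using t1(2) j by auto
    show "t1 - Bx \<le> V j" using t2(2) j i2 by auto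
  qed
qed

lemma tc_eq: "total_cond n E c j = (\<Sum>i\<in>{..<n}. w j i)"
  unfolding total_cond_def using sum_w_conv[where h="\<lambda>_. 1" and n=n and E=E and c=c and i=j] by simp

end


context net2 begin

lemma final:
  fixes x :: "nat \<Rightarrow> nat" and p :: "nat \<Rightarrow> real"
  assumes harm: "harmonic_off n E c G V" and V01: "\<And>i. i < n \<Longrightarrow> 0 \<le> V i \<and> V i \<le> 1"
    and i: "i \<in> V'" and bnd: "\<forall>j\<in>V'. lo \<le> V j \<and> V j \<le> lo + W0"
    and inj: "inj_on x {..<K}" and Gx: "G = x ` {..<K}" and pV: "\<And>k. k < K \<Longrightarrow> V (x k) = p k"
  shows "\<bar>V i - (\<Sum>k<K. p k * total_cond n E c (x k)) / (\<Sum>k<K. total_cond n E c (x k))\<bar>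
           \<le> W0 + real K ^ 2 * C2 / (C1 * D0)"
proof -
  define W where "W j = (\<Sum>i\<in>V'. w j i)" for j
  define e where "e j = (\<Sum>i\<in>G. w j i)" for j
  define Wt where "Wt = (\<Sum>j\<in>G. W j)"
  define Et where "Et = (\<Sum>j\<in>G. e j)"
  define X where "X = (\<Sum>j\<in>G. V j * W j)"
  define Y where "Y = (\<Sum>j\<in>G. V j * e j)"
  have Gn: "j \<in> G \<Longrightarrow> j < n" for j using G_sub by auto
  have Vn: "j \<in> V' \<Longrightarrow> j < n" for j using V'_sub by auto
  have tc: "total_cond n E c j = W j + e j" for j
    unfolding tc_eq W_def e_def V'_def by (intro sum.subset_diff G_sub) simp
  have num: "(\<Sum>k<K. p k * total_cond n E c (x k)) = X + Y"
  proof -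
    have "(\<Sum>k<K. p k * total_cond n E c (x k)) = (\<Sum>k<K. (\<lambda>j. V j * total_cond n E c j) (x k))"
      using pV by (intro sum.cong refl) simp
    also have "\<dots> = (\<Sum>j\<in>G. V j * total_cond n E c j)"
      unfolding Gx by (rule sum.reindex[OF inj, symmetric, unfolded comp_def])
    also have "\<dots> = X + Y" unfolding X_def Y_def tc by (simp add: algebra_simps sum.distrib)
    finally show ?thesis .
  qed
  have den: "(\<Sum>k<K. total_cond n E c (x k)) = Wt + Et"
  proof -
    have "(\<Sum>k<K. total_cond n E c (x k)) = (\<Sum>j\<in>G. total_cond n E c j)"
      unfolding Gx by (rule sum.reindex[OF inj, symmetric, unfolded comp_def])
    also have "\<dots> = Wt + Et" unfolding Wt_def Et_def tc by (simp add: sum.distrib)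
    finally show ?thesis .
  qed
  have Wt_alt: "Wt = (\<Sum>i\<in>V'. \<Sum>j\<in>G. w i j)"
  proof -
    have "Wt = (\<Sum>j\<in>G. \<Sum>i\<in>V'. w i j)" unfolding Wt_def W_def by (intro sum.cong refl) (rule w_sym)
    also have "\<dots> = (\<Sum>i\<in>V'. \<Sum>j\<in>G. w i j)" by (rule sum.swap)
    finally show ?thesis .
  qed
  have X_alt: "X = (\<Sum>i\<in>V'. \<Sum>j\<in>G. w i j * V i)"
  proof -
    have "X = (\<Sum>j\<in>G. \<Sum>i\<in>V'. w i j * V j)" unfolding X_def W_def
      by (simp add: sum_distrib_left w_sym[of _ "_::nat"] algebra_simps)
    also have "\<dots> = (\<Sum>i\<in>V'. \<Sum>j\<in>G. w i j * V j)" by (rule sum.swap)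
    also have "\<dots> = (\<Sum>i\<in>V'. \<Sum>j\<in>G. w i j * V i)"
    proof -
      have "(\<Sum>i\<in>V'. \<Sum>j\<in>G. w i j * V i) - (\<Sum>i\<in>V'. \<Sum>j\<in>G. w i j * V j)
            = (\<Sum>i\<in>V'. \<Sum>j\<in>G. w i j * (V i - V j))"
        by (simp add: sum_subtractf[symmetric] algebra_simps)
      thus ?thesis using harm_total[OF harm] by simp
    qed
    finally show ?thesis .
  qed
  have wnn: "0 \<le> Wt" unfolding Wt_alt by (intro sum_nonneg) (simp add: w_nonneg)
  have enn: "0 \<le> Et" unfolding Et_def e_def by (intro sum_nonneg) (simp add: w_nonneg)
  have Xlo: "lo * Wt \<le> X" unfolding X_alt Wt_alt sum_distrib_left
  proof (intro sum_mono)
    fix a b assume a: "a \<in> V'" and b: "b \<in> G"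
    have "lo \<le> V a" using bnd a by auto
    thus "lo * w a b \<le> w a b * V a" using w_nonneg[of a b]
      by (simp add: mult.commute mult_right_mono)
  qed
  have Xhi: "X \<le> (lo + W0) * Wt" unfolding X_alt Wt_alt sum_distrib_left
  proof (intro sum_mono)
    fix a b assume a: "a \<in> V'" and b: "b \<in> G"
    have "V a \<le> lo + W0" using bnd a by auto
    thus "w a b * V a \<le> (lo + W0) * w a b" using w_nonneg[of a b]
      by (simp add: mult.commute mult_right_mono)
  qed
  have Ylo: "0 \<le> Y" unfolding Y_def e_def using V01 Gn
    by (intro sum_nonneg mult_nonneg_nonneg sum_nonneg w_nonneg) auto
  have Yhi: "Y \<le> Et" unfolding Y_def Et_def
  proof (intro sum_mono)
    fix j assume j: "j \<in> G"
    have "0 \<le> e j" unfolding e_def by (intro sum_nonneg w_nonneg)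
    thus "V j * e j \<le> e j" using V01[OF Gn[OF j]] by (simp add: mult_left_le_one_le)
  qed
  have Etb: "Et \<le> real K ^ 2 * C2"
  proof -
    have "Et \<le> (\<Sum>j\<in>G. C2 * real (card G))" unfolding Et_def e_def by (intro sum_mono rowup)
    also have "\<dots> = real (card G) ^ 2 * C2" by (simp add: power2_eq_square)
    also have "\<dots> \<le> real K ^ 2 * C2" using cardG C2pos by (intro mult_right_mono power_mono) auto
    finally show ?thesis .
  qed
  obtain g0 where g0: "g0 \<in> G" using Gx K1 by (metis image_eqI lessThan_iff less_le_trans zero_less_one)
  have denlb: "C1 * D0 \<le> Wt + Et"
  proof -
    have "C1 * D0 \<le> C1 * (real (degree E g0) - real (card ({..<n} - {..<n})))"
      using deg[OF Gn[OF g0]] C1pos by (intro mult_left_mono) auto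
    also have "\<dots> \<le> total_cond n E c g0" unfolding tc_eq by (intro rowlow Gn[OF g0]) simp
    also have "\<dots> \<le> (\<Sum>j\<in>G. total_cond n E c j)"
      using g0 finG by (intro member_le_sum) (auto simp: tc_eq intro!: sum_nonneg w_nonneg)
    also have "\<dots> = Wt + Et" unfolding Wt_def Et_def tc by (simp add: sum.distrib)
    finally show ?thesis .
  qed
  have dpos: "0 < Wt + Et" using denlb C1pos D0pos by (smt (verit) mult_pos_pos)
  have vi: "lo \<le> V i" "V i \<le> lo + W0" using bnd i by auto
  have W0nn: "0 \<le> W0" using vi by simp
  have vi01: "0 \<le> V i" "V i \<le> 1" using V01[OF Vn[OF i]] by auto
  have key: "\<bar>V i * (Wt + Et) - (X + Y)\<bar> \<le> W0 * Wt + Et"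
  proof -
    have a1: "\<bar>V i * Wt - X\<bar> \<le> W0 * Wt"
    proof -
      have "lo * Wt \<le> V i * Wt" "V i * Wt \<le> (lo + W0) * Wt" using vi wnn by (auto intro: mult_right_mono)
      thus ?thesis using Xlo Xhi by (simp add: algebra_simps abs_le_iff)
    qed
    have a2: "\<bar>V i * Et - Y\<bar> \<le> Et"
    proof -
      have "0 \<le> V i * Et" "V i * Et \<le> Et" using vi01 enn by (auto simp: mult_left_le_one_le)
      thus ?thesis using Ylo Yhi by (simp add: abs_le_iff)
    qed
    have "\<bar>V i * (Wt + Et) - (X + Y)\<bar> = \<bar>(V i * Wt - X) + (V i * Et - Y)\<bar>" by (simp add: algebra_simps)
    also have "\<dots> \<le> \<bar>V i * Wt - X\<bar> + \<bar>V i * Et - Y\<bar>" by (rule abs_triangle_ineq)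
    finally show ?thesis using a1 a2 by linarith
  qed
  have "\<bar>V i - (X + Y) / (Wt + Et)\<bar> = \<bar>V i * (Wt + Et) - (X + Y)\<bar> / (Wt + Et)"
    using dpos by (simp add: field_simps)
  also have "\<dots> \<le> (W0 * Wt + Et) / (Wt + Et)" using key dpos by (intro divide_right_mono) auto
  also have "\<dots> \<le> W0 + Et / (Wt + Et)"
  proof -
    have "W0 * Wt \<le> W0 * (Wt + Et)" using W0nn enn by (intro mult_left_mono) auto
    hence "W0 * Wt / (Wt + Et) \<le> W0" using dpos by (simp add: pos_divide_le_eq)
    thus ?thesis by (simp add: add_divide_distrib)
  qed
  also have "Et / (Wt + Et) \<le> real K ^ 2 * C2 / (C1 * D0)"
    using Etb denlb enn C1pos D0pos by (intro frac_le) auto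
  finally show ?thesis unfolding num den by simp
qed

end


lemma wt_filter: "finite X \<Longrightarrow> (\<Sum>j\<in>X. wt E c i j) = (\<Sum>j\<in>{j\<in>X. E i j}. c i j)"
  by (simp only: wt_def sum.inter_filter)

lemma pairsum:
  assumes "finite S" "finite X"
  shows "(\<Sum>(i,j)\<in>{(i,j). i \<in> S \<and> j \<in> X \<and> E i j}. c i j) = (\<Sum>i\<in>S. \<Sum>j\<in>X. wt E c i j)"
proof -
  have "{(i,j). i \<in> S \<and> j \<in> X \<and> E i j} = Sigma S (\<lambda>i. {j\<in>X. E i j})" by auto
  hence "(\<Sum>(i,j)\<in>{(i,j). i \<in> S \<and> j \<in> X \<and> E i j}. c i j) = (\<Sum>i\<in>S. \<Sum>j\<in>{j\<in>X. E i j}. c i j)"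
    using assms by (simp add: sum.Sigma)
  also have "\<dots> = (\<Sum>i\<in>S. \<Sum>j\<in>X. wt E c i j)" by (rule sum.cong[OF refl]) (rule wt_filter[symmetric, OF assms(2)])
  finally show ?thesis .
qed

theorem theorem3p1:
  fixes C1 C2 C \<delta> :: real and K :: nat
  assumes "0 < C1" "C1 \<le> C2" "K \<ge> 1" "C > 0" "\<delta> > 0"
  shows "\<exists>M n0. \<forall>n\<ge>n0. \<forall>E c (x :: nat \<Rightarrow> nat) (p :: nat \<Rightarrow> real) V.
     proper C1 C2 K C \<delta> n E \<and> conductance E c \<and> (\<forall>i j. E i j \<longrightarrow> C1 \<le> c i j \<and> c i j \<le> C2) \<and>
     (\<forall>k<K. x k < n) \<and> inj_on x {..<K} \<and> (\<forall>k<K. 0 \<le> p k \<and> p k \<le> 1) \<and>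
     (\<forall>k<K. V (x k) = p k) \<and> harmonic_off n E c (x ` {..<K}) V \<longrightarrow>
     (\<forall>i<n. i \<notin> x ` {..<K} \<longrightarrow>
        \<bar>V i - (\<Sum>k<K. p k * total_cond n E c (x k)) / (\<Sum>k<K. total_cond n E c (x k))\<bar>
          \<le> M / ln (real n))"
proof -
  note C1pos = assms(1) and C12 = assms(2) and K1 = assms(3) and Cpos = assms(4) and dpos = assms(5)
  have C2pos: "0 < C2" using C1pos C12 by linarith
  define \<phi> where "\<phi> = C1 / (6 * C2)"
  define \<rho> where "\<rho> = \<phi> * C1 * \<delta> / (16 * C2)"
  define R where "R = 8 * C2 * real K / (C1 * \<delta> * C) + 128 * real K * C2^2 / (\<phi> * C1^2 * \<delta>^2 * C) * ((1 + \<rho>) / \<rho>)"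
  define M where "M = 2 * R + real K ^ 2 * C2 / (C1 * \<delta> * C)"
  define L0 where "L0 = max 1 (max (2 * real K / (\<delta> * C)) (8 * C2 / (C1 * \<delta> * C)))"
  define n0 where "n0 = nat \<lceil>exp L0\<rceil>"
  have phipos: "0 < \<phi>" unfolding \<phi>_def using C1pos C2pos by simp
  have rhopos: "0 < \<rho>" unfolding \<rho>_def using phipos C1pos C2pos dpos by simp
  have main: "\<bar>V i - (\<Sum>k<K. p k * total_cond n E c (x k)) / (\<Sum>k<K. total_cond n E c (x k))\<bar>
          \<le> M / ln (real n)"
    if n: "n0 \<le> n" and P: "proper C1 C2 K C \<delta> n E" and cond: "conductance E c"
      and cb: "\<forall>i j. E i j \<longrightarrow> C1 \<le> c i j \<and> c i j \<le> C2"
      and xn: "\<forall>k<K. x k < n" and inj: "inj_on x {..<K}" and p01: "\<forall>k<K. 0 \<le> p k \<and> p k \<le> 1"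
      and pV: "\<forall>k<K. V (x k) = p k" and harm: "harmonic_off n E c (x ` {..<K}) V"
      and i: "i < n" and iG: "i \<notin> x ` {..<K}"
    for n E c x p V i
  proof -
    define l where "l = ln (real n)"
    define G where "G = x ` {..<K}"
    have "exp L0 \<le> real n"
    proof -
      have "exp L0 \<le> real_of_int \<lceil>exp L0\<rceil>" by simp
      also have "\<dots> = real n0" unfolding n0_def by (simp add: less_imp_le)
      also have "\<dots> \<le> real n" using n by simp
      finally show ?thesis .
    qed
    hence npos: "0 < n" by (metis exp_gt_zero less_le_trans of_nat_0_less_iff)
    have lL0: "L0 \<le> l" unfolding l_def using \<open>exp L0 \<le> real n\<close> npos
      by (metis exp_gt_zero less_le_trans ln_exp ln_le_cancel_iff)
    have l1: "1 \<le> l" and l2: "2 * real K / (\<delta> * C) \<le> l" and l3: "8 * C2 / (C1 * \<delta> * C) \<le> l"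
      using lL0 unfolding L0_def by auto
    have lpos: "0 < l" using l1 by simp
    have sg: "simple_graph n E" and conn: "connected_graph n E"
      and P5: "\<forall>i<n. \<delta> * C * ln (real n) < real (degree E i) \<and> real (degree E i) < 4 * C * ln (real n)"
      using P unfolding proper_def by blast+
    have Gsub: "G \<subseteq> {..<n}" unfolding G_def using xn by auto
    have cardG: "card G = K" unfolding G_def using inj by (simp add: card_image)
    have P4p: "C1 / (6 * C2) \<le> (\<Sum>(i,j)\<in>{(i,j). i \<in> S \<and> j \<in> {..<n} - (G \<union> S) \<and> E i j}. c i j) /
        (\<Sum>i\<in>S. \<Sum>j\<in>{j. j \<in> {..<n} - G \<and> E i j}. c i j)"
      if "S \<subseteq> {..<n} - G" "S \<noteq> {}" "real (card S) \<le> real n / 2" for S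
    proof -
      have "\<forall>c L S. conductance E c \<and> (\<forall>i j. E i j \<longrightarrow> C1 \<le> c i j \<and> c i j \<le> C2) \<and>
        L \<subseteq> {..<n} \<and> card L \<le> K \<and> S \<subseteq> {..<n} - L \<and> S \<noteq> {} \<and> real (card S) \<le> real n / 2 \<longrightarrow>
        (\<Sum>(i,j)\<in>{(i,j). i \<in> S \<and> j \<in> {..<n} - (L \<union> S) \<and> E i j}. c i j) /
        (\<Sum>i\<in>S. \<Sum>j\<in>{j. j \<in> {..<n} - L \<and> E i j}. c i j)
        \<ge> C1 / (6 * C2)" using P unfolding proper_def by blast
      thus ?thesis using cond cb Gsub cardG that by blast
    qed
    define D0 where "D0 = \<delta> * C * l"
    define Dmax where "Dmax = 4 * C * l"
    interpret net n E c G C1 C2 D0 Dmax K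
    proof
      show "simple_graph n E" by (rule sg)
      show "conductance E c" by (rule cond)
      show "\<And>i j. E i j \<Longrightarrow> C1 \<le> c i j \<and> c i j \<le> C2" using cb by blast
      show "0 < C1" "C1 \<le> C2" by (rule C1pos, rule C12)
      show "G \<subseteq> {..<n}" by (rule Gsub)
      show "card G \<le> K" using cardG by simp
      show "1 \<le> K" by (rule K1)
      show "\<And>i. i < n \<Longrightarrow> D0 < real (degree E i) \<and> real (degree E i) < Dmax"
        using P5 unfolding D0_def Dmax_def l_def by blast
      show "2 * real K \<le> D0" using l2 dpos Cpos unfolding D0_def by (simp add: field_simps)
      show "0 < n" by (rule npos)
    qed
    interpret net2 n E c G C1 C2 D0 Dmax K \<phi>
    proof
      show "0 < \<phi>" by (rule phipos)
      fix S assume S: "S \<subseteq> {..<n} - G" "S \<noteq> {}" "2 * real (card S) \<le> real n"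
      have fS: "finite S" using S(1) finite_subset by blast
      have h: "C1 / (6 * C2) \<le> (\<Sum>(i,j)\<in>{(i,j). i \<in> S \<and> j \<in> {..<n} - (G \<union> S) \<and> E i j}. c i j) /
        (\<Sum>i\<in>S. \<Sum>j\<in>{j. j \<in> {..<n} - G \<and> E i j}. c i j)" using P4p S by simp
      have e1: "(\<Sum>(i,j)\<in>{(i,j). i \<in> S \<and> j \<in> {..<n} - (G \<union> S) \<and> E i j}. c i j)
          = (\<Sum>i\<in>S. \<Sum>j\<in>({..<n} - G) - S. w i j)"
      proof -
        have "{..<n} - (G \<union> S) = ({..<n} - G) - S" by auto
        thus ?thesis using pairsum[OF fS, where X="({..<n} - G) - S" and E=E and c=c] by simp
      qed
      have e2: "(\<Sum>i\<in>S. \<Sum>j\<in>{j. j \<in> {..<n} - G \<and> E i j}. c i j) = (\<Sum>i\<in>S. \<Sum>j\<in>{..<n} - G. w i j)"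
        by (rule sum.cong[OF refl]) (rule wt_filter[symmetric], simp)
      have "0 < (\<Sum>i\<in>S. \<Sum>j\<in>{..<n} - G. w i j)"
      proof -
        have "real (card S) * (C1 * (D0 / 2)) \<le> (\<Sum>i\<in>S. \<Sum>j\<in>{..<n} - G. w i j)"
          using vollow[of S] S(1) unfolding V'_def by simp
        moreover have "0 < real (card S) * (C1 * (D0 / 2))"
          using S(2) fS C1pos D0pos by (simp add: card_gt_0_iff)
        ultimately show ?thesis by linarith
      qed
      thus "\<phi> * (\<Sum>i\<in>S. \<Sum>j\<in>{..<n} - G. w i j) \<le> (\<Sum>i\<in>S. \<Sum>j\<in>({..<n} - G) - S. w i j)"
        using h unfolding e1 e2 \<phi>_def by (simp add: pos_le_divide_eq)
    qed
    have "x 0 \<in> G" unfolding G_def using K1 by simp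
    hence Gne: "G \<noteq> {}" by auto
    have b1: "\<forall>j\<in>G. V j \<le> 1" and b0: "\<forall>j\<in>G. 1 - V j \<le> 1" unfolding G_def using pV p01 by auto
    have harmG: "harmonic_off n E c G V" using harm unfolding G_def .
    have up: "\<forall>i<n. V i \<le> 1" by (rule maxp[OF sg cond conn Gsub Gne harmG b1])
    have lo: "\<forall>i<n. 1 - V i \<le> 1" by (rule maxp[OF sg cond conn Gsub Gne harm_neg[OF harmG] b0])
    have V01: "\<And>i. i < n \<Longrightarrow> 0 \<le> V i \<and> V i \<le> 1" using up lo by force
    have iV': "i \<in> V'"
    proof -
      have "V' = {..<n} - G" by (rule V'_def)
      thus ?thesis using i iG unfolding G_def by auto
    qed
    have A0ge: "1 \<le> C1 * (D0/2) / (4 * C2)"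
      using l3 C1pos C2pos dpos Cpos unfolding D0_def by (simp add: field_simps)
    obtain lo where lo: "\<forall>j\<in>V'. lo \<le> V j \<and> V j \<le> lo + 2 * Bx"
      using spread[OF harmG V01 _ A0ge] iV' by blast
    have fin: "\<bar>V i - (\<Sum>k<K. p k * total_cond n E c (x k)) / (\<Sum>k<K. total_cond n E c (x k))\<bar>
           \<le> 2 * Bx + real K ^ 2 * C2 / (C1 * D0)"
      using final[OF harmG V01 iV' lo inj G_def] pV by simp
    have rho_eq: "\<phi> * C1 * (D0/2) / (2 * C2 * Dmax) = \<rho>"
      unfolding \<rho>_def D0_def Dmax_def using lpos Cpos C2pos by (simp add: field_simps)
    have "Bx = R / l"
      unfolding Bx_def Let_def rho_eq unfolding R_def D0_def Dmax_def
      using lpos Cpos C2pos C1pos dpos phipos rhopos by (simp add: field_simps power2_eq_square)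
    moreover have "real K ^ 2 * C2 / (C1 * D0) = real K ^ 2 * C2 / (C1 * \<delta> * C) / l"
      unfolding D0_def by (simp add: field_simps)
    ultimately have "2 * Bx + real K ^ 2 * C2 / (C1 * D0) = M / l"
      unfolding M_def by (simp add: add_divide_distrib)
    thus ?thesis using fin unfolding l_def by simp
  qed
  show ?thesis
    by (rule exI[of _ M], rule exI[of _ n0]) (use main in blast)
qed


end
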